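(* Let $d\ge2$, $\mathcal H_S=\mathbb C^d$ with orthonormal basis $\{|k\rangle\}$. For a unit vector $|\psi\rangle\in\mathcal H_S$ define the channel $\mathcal C_\psi(\rho)=|1\rangle\langle1|\,\langle\psi|\rho|\psi\rangle+\frac{I-|1\rangle\langle1|}{d-1}\operatorname{Tr}[(I-|\psi\rangle\langle\psi|)\rho]$. The only basis-preserving channel $\mathcal B$ satisfying $\mathcal B\circ\mathcal C_\psi=\mathcal C_\psi\circ\mathcal B$ for every unit vector $|\psi\rangle$ is the identity channel. Consequently, the commutant (within all quantum channels on $M_d(\mathbb C)$) of the set of maximally incoherent operations, and of the set of incoherent operations, is $\{\mathcal I_S\}$, so the subsystem associated to either set is the whole quantum system.
   Context: A channel $\mathcal B$ is basis-preserving if $\mathcal B(|k\rangle\langle k|)=|k\rangle\langle k|$ for all $k$. Let $\mathcal D(\cdot)=\sum_k|k\rangle\langle k|\cdot|k\rangle\langle k|$. Maximally incoherent operations are channels $\mathcal T$ with $\mathcal T\circ\mathcal D=\mathcal D\circ\mathcal T\circ\mathcal D$. Incoherent operations are channels having a Kraus representation $\{T_i\}$ such that each $\mathcal T_i(\cdot)=T_i\cdot T_i^\dagger$ satisfies $\mathcal T_i\circ\mathcal D=\mathcal D\circ\mathcal T_i\circ\mathcal D$. The commutant of a set of channels is the set of channels commuting under composition with all of its elements. *)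

theory Defs
  imports "HOL-Analysis.Analysis"
begin

text \<open>Operators on C^d are matrices of type complex^'n^'n, with the finite type 'n
  indexing the computational (orthonormal) basis; d = CARD('n).\<close>

type_synonym 'n cmat = "complex^'n^'n"

definition adj :: "'n::finite cmat \<Rightarrow> 'n cmat" where
  "adj A = (\<chi> i j. cnj (A $ j $ i))"

definition mtrace :: "'n::finite cmat \<Rightarrow> complex" where
  "mtrace A = (\<Sum>i\<in>UNIV. A $ i $ i)"

definition proj_basis :: "'n::finite \<Rightarrow> 'n cmat" where
  "proj_basis k = (\<chi> i j. if i = k \<and> j = k then 1 else 0)"

text \<open>Quantum channel: CPTP map, given by a finite Kraus representation.\<close>
definition kraus_rep :: "('n::finite cmat \<Rightarrow> 'n cmat) \<Rightarrow> 'n cmat list \<Rightarrow> bool" where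
  "kraus_rep T Ks \<longleftrightarrow>
     (\<forall>\<rho>. T \<rho> = sum_list (map (\<lambda>K. K ** \<rho> ** adj K) Ks)) \<and>
     sum_list (map (\<lambda>K. adj K ** K) Ks) = mat 1"

definition channel :: "('n::finite cmat \<Rightarrow> 'n cmat) \<Rightarrow> bool" where
  "channel T \<longleftrightarrow> (\<exists>Ks. kraus_rep T Ks)"

definition dephase :: "'n::finite cmat \<Rightarrow> 'n cmat" where
  "dephase \<rho> = (\<chi> i j. if i = j then \<rho> $ i $ i else 0)"

definition basis_preserving :: "('n::finite cmat \<Rightarrow> 'n cmat) \<Rightarrow> bool" where
  "basis_preserving B \<longleftrightarrow> (\<forall>k. B (proj_basis k) = proj_basis k)"

definition MIO :: "('n::finite cmat \<Rightarrow> 'n cmat) set" where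
  "MIO = {T. channel T \<and> T \<circ> dephase = dephase \<circ> T \<circ> dephase}"

definition IO :: "('n::finite cmat \<Rightarrow> 'n cmat) set" where
  "IO = {T. \<exists>Ks. kraus_rep T Ks \<and>
              (\<forall>K\<in>set Ks. (\<lambda>\<rho>. K ** \<rho> ** adj K) \<circ> dephase
                          = dephase \<circ> (\<lambda>\<rho>. K ** \<rho> ** adj K) \<circ> dephase)}"

definition commutant :: "('n::finite cmat \<Rightarrow> 'n cmat) set \<Rightarrow> ('n cmat \<Rightarrow> 'n cmat) set" where
  "commutant S = {T. channel T \<and> (\<forall>E\<in>S. T \<circ> E = E \<circ> T)}"

definition expect :: "complex^'n::finite \<Rightarrow> 'n cmat \<Rightarrow> complex" where
  "expect \<psi> \<rho> = (\<Sum>i\<in>UNIV. \<Sum>j\<in>UNIV. cnj (\<psi> $ i) * \<rho> $ i $ j * \<psi> $ j)"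

text \<open>C_psi(rho) = |1><1| <psi|rho|psi> + (I - |1><1|)/(d-1) Tr[(I - |psi><psi|) rho],
  where e1 is the basis label playing the role of |1>.\<close>
definition C_psi :: "'n::finite \<Rightarrow> complex^'n \<Rightarrow> 'n cmat \<Rightarrow> 'n cmat" where
  "C_psi e1 \<psi> \<rho> =
     (\<chi> i j. proj_basis e1 $ i $ j * expect \<psi> \<rho>
            + ((mat 1 - proj_basis e1) $ i $ j / (of_nat CARD('n) - 1))
              * (mtrace \<rho> - expect \<psi> \<rho>))"

end

theory Submission imports Defs begin

lemma sl_entry: "(sum_list (map f xs) :: 'n::finite cmat) $ i $ j = sum_list (map (\<lambda>x. f x $ i $ j) xs)"
  by (induction xs) auto

lemma sandw_entry: "(K ** \<rho> ** adj K) $ i $ j = (\<Sum>a\<in>UNIV. \<Sum>b\<in>UNIV. K$i$a * \<rho>$a$b * cnj (K$j$b))"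
proof -
  have "(K ** \<rho> ** adj K) $ i $ j = (\<Sum>b\<in>UNIV. \<Sum>a\<in>UNIV. K$i$a * \<rho>$a$b * cnj (K$j$b))"
    by (simp add: matrix_matrix_mult_def adj_def sum_distrib_right)
  also have "\<dots> = (\<Sum>a\<in>UNIV. \<Sum>b\<in>UNIV. K$i$a * \<rho>$a$b * cnj (K$j$b))"
    by (rule sum.swap)
  finally show ?thesis .
qed

definition outer :: "complex^'n::finite \<Rightarrow> complex^'n \<Rightarrow> 'n cmat" where
  "outer u v = (\<chi> i j. u$i * cnj (v$j))"

lemma sandw_outer: "outer u v ** \<rho> ** adj (outer u v) = (\<chi> i j. u$i * cnj (u$j) * expect v \<rho>)"
  by (simp add: vec_eq_iff sandw_entry outer_def expect_def sum_distrib_left mult_ac)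

lemma adj_outer: "adj (outer u v) ** outer u v = (\<chi> i j. (\<Sum>a\<in>UNIV. cnj (u$a) * u$a) * v$i * cnj (v$j))"
  apply (simp add: vec_eq_iff matrix_matrix_mult_def adj_def outer_def sum_distrib_left sum_distrib_right)
  apply (intro allI sum.cong) by (simp_all add: mult_ac)

lemma mat1_entry: "(mat 1 :: 'n::finite cmat) $ i $ j = (if i = j then 1 else 0)"
  by (simp add: mat_def)


definition diagm :: "('n::finite \<Rightarrow> complex) \<Rightarrow> 'n cmat" where
  "diagm f = (\<chi> i j. if i = j then f i else 0)"

lemma sl_sum_swap: "sum_list (map (\<lambda>K. \<Sum>a\<in>A. g a K) Ks) = (\<Sum>a\<in>A. sum_list (map (g a) Ks))"
  by (induction Ks) (auto simp: sum.distrib)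

lemma sl_cmult: "sum_list (map (\<lambda>K. (c::complex) * h K) Ks) = c * sum_list (map h Ks)"
  by (induction Ks) (auto simp: algebra_simps)

lemma mult_ifR: "(x::complex) * (if P then y else 0) = (if P then x*y else 0)" by simp
lemma mult_ifL: "(if P then y else 0) * (x::complex) = (if P then y*x else 0)" by simp
lemma cnj_if: "cnj (if P then x else 0) = (if P then cnj x else 0)" by simp

lemma if_conj0: "(if P \<and> Q then x else (0::complex)) = (if P then if Q then x else 0 else 0)" by simp

lemma sandw_proj: "(K ** proj_basis a ** adj K) $ i $ j = K$i$a * cnj (K$j$a)"
proof -
  have "(K ** proj_basis a ** adj K) $ i $ j = (\<Sum>aa\<in>UNIV. \<Sum>b\<in>UNIV. if aa = a \<and> b = a then K$i$aa * cnj (K$j$b) else 0)"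
    unfolding sandw_entry by (intro sum.cong refl) (simp add: proj_basis_def)
  also have "\<dots> = (\<Sum>aa\<in>UNIV. if aa = a then K$i$a * cnj (K$j$a) else 0)"
    by (intro sum.cong refl, case_tac "x = a") simp_all
  also have "\<dots> = K$i$a * cnj (K$j$a)"
    by simp
  finally show ?thesis .
qed

lemma kraus_diag:
  assumes "kraus_rep T Ks" "basis_preserving T"
  shows "T (diagm f) = diagm f"
proof -
  have e: "(K ** diagm f ** adj K) $ i $ j = (\<Sum>a\<in>UNIV. f a * (K ** proj_basis a ** adj K) $ i $ j)" for K i j
    unfolding sandw_proj unfolding sandw_entry
    by (intro sum.cong refl) (simp add: diagm_def mult_ifR mult_ifL mult_ac)
  have "T (diagm f) $ i $ j = diagm f $ i $ j" for i j
  proof -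
    have "T (diagm f) $ i $ j = sum_list (map (\<lambda>K. (K ** diagm f ** adj K) $ i $ j) Ks)"
      using assms(1) by (simp add: kraus_rep_def sl_entry)
    also have "\<dots> = (\<Sum>a\<in>UNIV. f a * sum_list (map (\<lambda>K. (K ** proj_basis a ** adj K) $ i $ j) Ks))"
      by (simp add: e sl_sum_swap sl_cmult)
    also have "\<dots> = (\<Sum>a\<in>UNIV. f a * T (proj_basis a) $ i $ j)"
      using assms(1) by (simp add: kraus_rep_def sl_entry)
    also have "\<dots> = (\<Sum>a\<in>UNIV. f a * proj_basis a $ i $ j)"
      using assms(2) by (simp add: basis_preserving_def)
    also have "\<dots> = diagm f $ i $ j"
      by (cases "i = j") (auto simp: proj_basis_def diagm_def if_distrib intro!: sum.neutral cong: if_cong)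
    finally show ?thesis .
  qed
  then show ?thesis by (simp add: vec_eq_iff)
qed

lemma C_psi_diag: "C_psi (e1::'n::finite) \<psi> \<rho> = diagm (\<lambda>k. if k = e1 then expect \<psi> \<rho>
     else (mtrace \<rho> - expect \<psi> \<rho>) / (of_nat CARD('n) - 1))"
  by (simp add: vec_eq_iff C_psi_def diagm_def proj_basis_def mat_def)

lemma expect_diff: "expect v (A - B) = expect v A - expect v B"
  by (simp add: expect_def algebra_simps sum_subtractf)

lemma expect_scale: "expect ((r::real) *\<^sub>R (v::complex^'n::finite)) M = complex_of_real (r^2) * expect v M"
  unfolding expect_def vector_scaleR_component by (simp add: scaleR_conv_of_real sum_distrib_left power2_eq_square mult_ac)

lemma sum2_delta: fixes i j :: "'n::finite" shows "(\<Sum>a\<in>UNIV. \<Sum>b\<in>UNIV. if a = i \<and> b = j then f a b else (0::complex)) = f i j"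
proof -
  have "(\<Sum>a\<in>UNIV. \<Sum>b\<in>UNIV. if a = i \<and> b = j then f a b else (0::complex))
      = (\<Sum>a\<in>(UNIV::'n::finite set). if a = i then f a j else 0)"
    by (intro sum.cong refl, case_tac "x = i") simp_all
  also have "\<dots> = f i j" by simp
  finally show ?thesis .
qed

lemma expect_ev: "expect (\<chi> a. if a = i then 1 else 0) M = M$i$i"
proof -
  have "expect (\<chi> a. if a = i then 1 else 0) M = (\<Sum>a\<in>UNIV. \<Sum>b\<in>UNIV. if a = i \<and> b = i then M$a$b else 0)"
    unfolding expect_def by (intro sum.cong refl) auto
  also have "\<dots> = M$i$i" by (rule sum2_delta)
  finally show ?thesis .
qed

lemma expect_two:
  fixes i j :: "'n::finite"
  assumes "i \<noteq> j"
  shows "expect (\<chi> a. (if a = i then 1 else 0) + (if a = j then c else 0)) M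
         = M$i$i + c*M$i$j + cnj c * M$j$i + cnj c * c * M$j$j"
proof -
  have "expect (\<chi> a. (if a = i then 1 else 0) + (if a = j then c else 0)) M
     = (\<Sum>a\<in>UNIV. \<Sum>b\<in>UNIV. (if a = i \<and> b = i then M$a$b else 0)
          + (if a = i \<and> b = j then c * M$a$b else 0)
          + (if a = j \<and> b = i then cnj c * M$a$b else 0)
          + (if a = j \<and> b = j then cnj c * c * M$a$b else 0))"
    unfolding expect_def by (intro sum.cong refl) (use assms in auto)
  also have "\<dots> = M$i$i + c*M$i$j + cnj c * M$j$i + cnj c * c * M$j$j"
    by (simp only: sum.distrib sum2_delta)
  finally show ?thesis .
qed

lemma qf_zero:
  fixes M :: "'n::finite cmat"
  assumes "\<And>v. expect v M = 0"
  shows "M = 0"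
proof -
  have "M$i$j = 0" for i j
  proof (cases "i = j")
    case True
    then show ?thesis using assms[of "\<chi> a. if a = i then 1 else 0"] by (simp add: expect_ev)
  next
    case False
    have ii: "M$i$i = 0" "M$j$j = 0"
      using assms[of "\<chi> a. if a = i then 1 else 0"] assms[of "\<chi> a. if a = j then 1 else 0"]
      by (simp_all add: expect_ev)
    have 1: "M$i$j + M$j$i = 0"
      using assms[of "\<chi> a. (if a = i then 1 else 0) + (if a = j then 1 else 0)"] False ii
      by (simp add: expect_two)
    have 2: "\<i> * M$i$j - \<i> * M$j$i = 0"
      using assms[of "\<chi> a. (if a = i then 1 else 0) + (if a = j then \<i> else 0)"] False ii
      by (simp add: expect_two)
    from 2 have "M$i$j = M$j$i" by (simp add: right_diff_distrib[symmetric])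
    with 1 show ?thesis by simp
  qed
  then show ?thesis by (simp add: vec_eq_iff)
qed

lemma expect_zero_vec: "expect 0 M = 0"
  by (simp add: expect_def)

lemma part1:
  fixes e1 :: "'n::finite"
  assumes "channel B" "basis_preserving B"
    and comm: "\<forall>\<psi>::complex^'n. norm \<psi> = 1 \<longrightarrow> B \<circ> C_psi e1 \<psi> = C_psi e1 \<psi> \<circ> B"
  shows "B = id"
proof
  fix \<rho> :: "'n cmat"
  obtain Ks where K: "kraus_rep B Ks" using assms(1) by (auto simp: channel_def)
  have unit: "expect \<psi> (\<rho> - B \<rho>) = 0" if "norm \<psi> = 1" for \<psi>
  proof -
    have "C_psi e1 \<psi> (B \<rho>) = B (C_psi e1 \<psi> \<rho>)"
      using comm that by (metis comp_apply)
    also have "\<dots> = C_psi e1 \<psi> \<rho>"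
      unfolding C_psi_diag using kraus_diag[OF K assms(2)] by simp
    finally have "C_psi e1 \<psi> (B \<rho>) $ e1 $ e1 = C_psi e1 \<psi> \<rho> $ e1 $ e1" by simp
    then have "expect \<psi> (B \<rho>) = expect \<psi> \<rho>"
      by (simp add: C_psi_def proj_basis_def mat_def)
    then show ?thesis by (simp add: expect_diff)
  qed
  have "expect v (\<rho> - B \<rho>) = 0" for v
  proof (cases "v = 0")
    case True then show ?thesis by (simp add: expect_zero_vec)
  next
    case False
    then have "norm ((1 / norm v) *\<^sub>R v) = 1" by simp
    from unit[OF this] False show ?thesis by (simp add: expect_scale)
  qed
  then have "\<rho> - B \<rho> = 0" by (rule qf_zero)
  then show "B \<rho> = id \<rho>" by simp
qed

lemma adj_mat1: "adj (mat 1 :: 'n::finite cmat) = mat 1"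
  by (simp add: vec_eq_iff adj_def mat_def)

lemma channel_id: "channel (id :: 'n::finite cmat \<Rightarrow> 'n cmat)"
  unfolding channel_def kraus_rep_def
  by (rule exI[of _ "[mat 1]"]) (simp add: adj_mat1 matrix_mul_lid matrix_mul_rid)

lemma mtrace_sl: "mtrace (sum_list (map f xs)) = sum_list (map (\<lambda>x. mtrace (f x)) xs)"
  by (induction xs) (auto simp: mtrace_def sum.distrib)

lemma mat_add_rdistrib: "((A::'n::finite cmat) + B) ** C = A ** C + B ** C"
  by (simp add: vec_eq_iff matrix_matrix_mult_def distrib_right sum.distrib)

lemma sl_rmult: "sum_list (map (f :: _ \<Rightarrow> 'n::finite cmat) xs) ** (\<rho>::'n::finite cmat) = sum_list (map (\<lambda>x. f x ** \<rho>) xs)"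
  by (induction xs) (auto simp: mat_add_rdistrib)

lemma mtrace_trace: "mtrace A = trace A"
  by (simp add: mtrace_def trace_def)

lemma kraus_trace:
  fixes T :: "'a::finite cmat \<Rightarrow> 'a cmat"
  assumes "kraus_rep T Ks"
  shows "mtrace (T \<rho>) = mtrace \<rho>"
proof -
  have "mtrace (T \<rho>) = sum_list (map (\<lambda>K. mtrace (K ** \<rho> ** adj K)) Ks)"
    using assms by (simp add: kraus_rep_def mtrace_sl)
  also have "\<dots> = sum_list (map (\<lambda>K. mtrace (adj K ** K ** \<rho>)) Ks)"
  proof -
    have "mtrace (K ** \<rho> ** adj K) = mtrace (adj K ** K ** \<rho>)" for K :: "'a cmat"
      unfolding mtrace_trace by (metis trace_mul_sym matrix_mul_assoc)
    then show ?thesis by simp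
  qed
  also have "\<dots> = mtrace (sum_list (map (\<lambda>K. adj K ** K) Ks) ** \<rho>)"
    by (simp add: sl_rmult mtrace_sl)
  also have "\<dots> = mtrace \<rho>" using assms by (simp add: kraus_rep_def matrix_mul_lid)
  finally show ?thesis .
qed

lemma dephase_sl: "dephase (sum_list (map f xs)) = sum_list (map (\<lambda>x. dephase (f x)) xs)"
  unfolding vec_eq_iff by (auto simp: dephase_def sl_entry)

lemma dephase_zero: "dephase 0 = 0" by (simp add: dephase_def vec_eq_iff)

lemma IO_sub_MIO: "IO \<subseteq> MIO"
proof
  fix T :: "'n::finite cmat \<Rightarrow> 'n cmat" assume "T \<in> IO"
  then obtain Ks where K: "kraus_rep T Ks" and c: "\<forall>K\<in>set Ks. (\<lambda>\<rho>. K ** \<rho> ** adj K) \<circ> dephase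
                          = dephase \<circ> (\<lambda>\<rho>. K ** \<rho> ** adj K) \<circ> dephase"
    by (auto simp: IO_def)
  have "T (dephase \<rho>) = dephase (T (dephase \<rho>))" for \<rho>
  proof -
    have "T (dephase \<rho>) = sum_list (map (\<lambda>K. K ** dephase \<rho> ** adj K) Ks)"
      using K by (simp add: kraus_rep_def)
    also have "\<dots> = sum_list (map (\<lambda>K. dephase (K ** dephase \<rho> ** adj K)) Ks)"
      by (intro arg_cong[where f=sum_list] map_cong refl) (use c in \<open>auto simp: fun_eq_iff\<close>)
    also have "\<dots> = dephase (T (dephase \<rho>))"
      using K by (simp add: kraus_rep_def dephase_sl)
    finally show ?thesis .
  qed
  then show "T \<in> MIO" using K by (auto simp: MIO_def channel_def fun_eq_iff)
qed

definition ev :: "'n::finite \<Rightarrow> complex^'n" where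
  "ev k = (\<chi> a. if a = k then 1 else 0)"

lemma IO_cond_outer:
  assumes "\<forall>a. a \<noteq> j \<longrightarrow> u$a = 0"
  shows "(\<lambda>\<rho>. outer u v ** \<rho> ** adj (outer u v)) \<circ> dephase
       = dephase \<circ> (\<lambda>\<rho>. outer u v ** \<rho> ** adj (outer u v)) \<circ> dephase"
  using assms by (auto simp: fun_eq_iff sandw_outer dephase_def vec_eq_iff; metis)

lemma sl_univ:
  assumes "distinct xs" "set xs = A"
  shows "sum_list (map g xs) = sum g A"
  using assms sum_list_distinct_conv_sum_set by metis

lemma ev_comp: "ev k $ a = (if a = k then 1 else 0)" by (simp add: ev_def)

lemma ev_norm: "(\<Sum>a\<in>UNIV. cnj (ev k $ a) * ev k $ a) = 1"
  by (simp add: ev_comp if_distrib cong: if_cong)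

lemma ev_sum_outer: "(\<Sum>l\<in>UNIV. ev l $ i * cnj (ev l $ j)) = (if i = j then 1 else 0)"
proof -
  have "(\<Sum>l\<in>UNIV. ev l $ i * cnj (ev l $ j)) = (\<Sum>l\<in>UNIV. if l = i then (if i = j then 1 else 0) else 0)"
    by (intro sum.cong refl) (auto simp: ev_comp)
  then show ?thesis by simp
qed

definition repl :: "'n::finite \<Rightarrow> 'n cmat \<Rightarrow> 'n cmat" where
  "repl k \<rho> = (\<chi> i j. proj_basis k $ i $ j * mtrace \<rho>)"

lemma repl_IO: "repl (k::'n::finite) \<in> IO"
proof -
  obtain xs :: "'n list" where xs: "set xs = UNIV" "distinct xs"
    using finite_distinct_list[of "UNIV :: 'n set"] by auto
  define Ks where "Ks = map (\<lambda>l. outer (ev k) (ev l)) xs"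
  have "repl k \<rho> = sum_list (map (\<lambda>K. K ** \<rho> ** adj K) Ks)" for \<rho>
  proof -
    have "sum_list (map (\<lambda>K. K ** \<rho> ** adj K) Ks) $ i $ j = repl k \<rho> $ i $ j" for i j
    proof -
      have "sum_list (map (\<lambda>K. K ** \<rho> ** adj K) Ks) $ i $ j
          = (\<Sum>l\<in>UNIV. ev k $ i * cnj (ev k $ j) * expect (ev l) \<rho>)"
        unfolding sl_entry Ks_def by (simp add: o_def sandw_outer sl_univ[OF xs(2,1)])
      also have "\<dots> = repl k \<rho> $ i $ j"
        by (simp add: ev_def repl_def proj_basis_def mtrace_def sum_distrib_left[symmetric]
             expect_ev)
      finally show ?thesis .
    qed
    then show ?thesis by (simp add: vec_eq_iff)
  qed
  moreover have "sum_list (map (\<lambda>K. adj K ** K) Ks) = mat 1"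
  proof -
    have "sum_list (map (\<lambda>K. adj K ** K) Ks) $ i $ j = mat 1 $ i $ j" for i j
      unfolding sl_entry Ks_def
      by (simp add: o_def adj_outer sl_univ[OF xs(2,1)] ev_norm ev_sum_outer mat_def)
    then show ?thesis by (simp add: vec_eq_iff)
  qed
  moreover have "\<forall>K\<in>set Ks. (\<lambda>\<rho>. K ** \<rho> ** adj K) \<circ> dephase
                          = dephase \<circ> (\<lambda>\<rho>. K ** \<rho> ** adj K) \<circ> dephase"
    unfolding Ks_def by (auto intro!: IO_cond_outer[of k] simp: ev_def)
  ultimately show ?thesis unfolding IO_def kraus_rep_def mem_Collect_eq by blast
qed

lemma unit_sum:
  fixes \<psi> :: "complex^'n::finite"
  assumes "norm \<psi> = 1"
  shows "(\<Sum>l\<in>UNIV. cnj (\<psi>$l) * \<psi>$l) = 1"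
proof -
  have "sqrt (\<Sum>l\<in>UNIV. (norm (\<psi>$l))^2) = 1"
    using assms by (simp add: norm_vec_def L2_set_def)
  then have S: "(\<Sum>l\<in>UNIV. (norm (\<psi>$l))^2) = 1"
    by (metis real_sqrt_eq_1_iff)
  have "(\<Sum>l\<in>UNIV. cnj (\<psi>$l) * \<psi>$l) = (\<Sum>l\<in>UNIV. complex_of_real ((norm (\<psi>$l))^2))"
    by (intro sum.cong refl) (metis complex_norm_square mult.commute)
  also have "\<dots> = 1" by (simp only: of_real_sum[symmetric] S) simp
  finally show ?thesis .
qed

definition wv :: "complex^'n::finite \<Rightarrow> 'n \<Rightarrow> complex^'n" where
  "wv \<psi> l = (\<chi> a. (if a = l then 1 else 0) - cnj (\<psi>$l) * \<psi>$a)"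

lemma wv_sum:
  fixes \<psi> :: "complex^'n::finite"
  assumes "norm \<psi> = 1"
  shows "(\<Sum>l\<in>UNIV. wv \<psi> l $ a * cnj (wv \<psi> l $ b)) = (if a = b then 1 else 0) - \<psi>$a * cnj (\<psi>$b)"
proof -
  have "(\<Sum>l\<in>UNIV. wv \<psi> l $ a * cnj (wv \<psi> l $ b))
     = (\<Sum>l\<in>UNIV. (if a = l then 1 else 0) * (if b = l then 1 else 0)
          - (if a = l then 1 else 0) * (\<psi>$l * cnj (\<psi>$b))
          - (if b = l then 1 else 0) * (cnj (\<psi>$l) * \<psi>$a)
          + (\<psi>$a * cnj (\<psi>$b)) * (cnj (\<psi>$l) * \<psi>$l))"
    by (intro sum.cong refl) (simp add: wv_def algebra_simps)
  also have "\<dots> = (if a = b then 1 else 0) - \<psi>$a * cnj (\<psi>$b) - \<psi>$a * cnj (\<psi>$b)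
          + (\<psi>$a * cnj (\<psi>$b)) * (\<Sum>l\<in>UNIV. cnj (\<psi>$l) * \<psi>$l)"
    by (simp add: sum.distrib sum_subtractf sum_distrib_left[symmetric] mult_ifL)
  also have "\<dots> = (if a = b then 1 else 0) - \<psi>$a * cnj (\<psi>$b)"
    using unit_sum[OF assms] by simp
  finally show ?thesis .
qed

lemma wv_expect:
  fixes \<psi> :: "complex^'n::finite"
  assumes "norm \<psi> = 1"
  shows "(\<Sum>l\<in>UNIV. expect (wv \<psi> l) \<rho>) = mtrace \<rho> - expect \<psi> \<rho>"
proof -
  have c: "(\<Sum>l\<in>UNIV. cnj (wv \<psi> l $ a) * wv \<psi> l $ b) = (if a = b then 1 else 0) - cnj (\<psi>$a) * \<psi>$b" for a b
  proof -
    have "(\<Sum>l\<in>UNIV. cnj (wv \<psi> l $ a) * wv \<psi> l $ b) = cnj (\<Sum>l\<in>UNIV. wv \<psi> l $ a * cnj (wv \<psi> l $ b))"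
      by (simp add: cnj_sum)
    then show ?thesis by (simp add: wv_sum[OF assms])
  qed
  have "(\<Sum>l\<in>UNIV. expect (wv \<psi> l) \<rho>)
      = (\<Sum>a\<in>UNIV. \<Sum>b\<in>UNIV. \<rho>$a$b * (\<Sum>l\<in>UNIV. cnj (wv \<psi> l $ a) * wv \<psi> l $ b))"
  proof -
    have "(\<Sum>l\<in>UNIV. expect (wv \<psi> l) \<rho>)
        = (\<Sum>l\<in>UNIV. \<Sum>a\<in>UNIV. \<Sum>b\<in>UNIV. \<rho>$a$b * (cnj (wv \<psi> l $ a) * wv \<psi> l $ b))"
      unfolding expect_def by (simp add: mult_ac)
    also have "\<dots> = (\<Sum>a\<in>UNIV. \<Sum>l\<in>UNIV. \<Sum>b\<in>UNIV. \<rho>$a$b * (cnj (wv \<psi> l $ a) * wv \<psi> l $ b))"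
      by (rule sum.swap)
    also have "\<dots> = (\<Sum>a\<in>UNIV. \<Sum>b\<in>UNIV. \<Sum>l\<in>UNIV. \<rho>$a$b * (cnj (wv \<psi> l $ a) * wv \<psi> l $ b))"
      by (rule sum.cong[OF refl], rule sum.swap)
    also have "\<dots> = (\<Sum>a\<in>UNIV. \<Sum>b\<in>UNIV. \<rho>$a$b * (\<Sum>l\<in>UNIV. cnj (wv \<psi> l $ a) * wv \<psi> l $ b))"
      by (simp add: sum_distrib_left)
    finally show ?thesis .
  qed
  also have "\<dots> = (\<Sum>a\<in>UNIV. \<Sum>b\<in>UNIV. (if a = b then \<rho>$a$b else 0) - cnj (\<psi>$a) * \<rho>$a$b * \<psi>$b)"
    unfolding c by (intro sum.cong refl) (simp add: algebra_simps)
  also have "\<dots> = mtrace \<rho> - expect \<psi> \<rho>"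
    by (simp add: sum_subtractf mtrace_def expect_def)
  finally show ?thesis .
qed

definition uv :: "complex \<Rightarrow> 'n::finite \<Rightarrow> complex^'n" where
  "uv c j = (\<chi> a. if a = j then c else 0)"

lemma uv_sum:
  fixes e1 :: "'n::finite"
  shows "(\<Sum>j\<in>UNIV - {e1}. uv c j $ i * cnj (uv c j $ i')) = (if i = i' \<and> i \<noteq> e1 then c * cnj c else 0)"
proof -
  have "(\<Sum>j\<in>UNIV - {e1}. uv c j $ i * cnj (uv c j $ i'))
      = (\<Sum>j\<in>UNIV - {e1}. if j = i then (if i = i' then c * cnj c else 0) else 0)"
    by (intro sum.cong refl) (auto simp: uv_def)
  also have "\<dots> = (if i = i' \<and> i \<noteq> e1 then c * cnj c else 0)"
    by (auto simp: sum.delta)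
  finally show ?thesis .
qed

lemma uv_norm: "(\<Sum>a\<in>UNIV. cnj (uv c j $ a) * uv c j $ a) = cnj c * c"
  by (simp add: uv_def if_distrib cong: if_cong)

lemma ev_outer_entry: "ev e1 $ i * cnj (ev e1 $ j) = proj_basis e1 $ i $ j"
  by (simp add: ev_def proj_basis_def)

lemma C_psi_IO:
  fixes e1 :: "'n::finite" and \<psi> :: "complex^'n"
  assumes d2: "CARD('n) \<ge> 2" and un: "norm \<psi> = 1"
  shows "C_psi e1 \<psi> \<in> IO"
proof -
  define d where "d = CARD('n)"
  define c where "c = complex_of_real (1 / sqrt (real d - 1))"
  have dpos: "real d - 1 > 0" using d2 by (simp add: d_def)
  have cc: "c * cnj c = 1 / (of_nat d - 1)" "cnj c * c = 1 / (of_nat d - 1)"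
  proof -
    have "c * cnj c = complex_of_real ((1 / sqrt (real d - 1))^2)"
      unfolding c_def by (simp only: complex_cnj_complex_of_real of_real_mult[symmetric] power2_eq_square)
    also have "\<dots> = complex_of_real (1 / (real d - 1))"
      using dpos by (simp add: power_divide)
    also have "\<dots> = 1 / (of_nat d - 1)" by simp
    finally show "c * cnj c = 1 / (of_nat d - 1)" .
    then show "cnj c * c = 1 / (of_nat d - 1)" by (simp add: mult.commute)
  qed
  have dne: "(of_nat d - 1 :: complex) \<noteq> 0"
  proof
    assume "(of_nat d - 1 :: complex) = 0"
    then have "complex_of_real (real d - 1) = 0" by simp
    with dpos show False by simp
  qed
  have cardA: "of_nat (card (UNIV - {e1})) = (of_nat d - 1 :: complex)"
  proof -
    have "card (UNIV - {e1}) = d - 1" by (simp add: d_def card_Diff_singleton)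
    moreover have "d \<ge> 1" using d2 by (simp add: d_def)
    ultimately show ?thesis by (simp add: of_nat_diff)
  qed
  obtain xs :: "'n list" where xs: "set xs = UNIV" "distinct xs"
    using finite_distinct_list[of "UNIV :: 'n set"] by auto
  define ys where "ys = filter (\<lambda>j. j \<noteq> e1) xs"
  have ys: "set ys = UNIV - {e1}" "distinct ys" using xs by (auto simp: ys_def)
  define P where "P = List.product ys xs"
  have P: "set P = (UNIV - {e1}) \<times> UNIV" "distinct P"
    using xs ys by (auto simp: P_def distinct_product)
  define g where "g = (\<lambda>p. outer (uv c (fst p)) (wv \<psi> (snd p)))"
  define Ks where "Ks = outer (ev e1) \<psi> # map g P"
  have prodsum: "sum_list (map (\<lambda>p. F (fst p) (snd p)) P) = (\<Sum>j\<in>UNIV - {e1}. \<Sum>l\<in>UNIV. F j l)" for F :: "'n \<Rightarrow> 'n \<Rightarrow> complex"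
    by (simp add: sl_univ[OF P(2,1)] sum.cartesian_product split_def)
  have K1: "C_psi e1 \<psi> \<rho> = sum_list (map (\<lambda>K. K ** \<rho> ** adj K) Ks)" for \<rho>
  proof -
    have "sum_list (map (\<lambda>K. K ** \<rho> ** adj K) Ks) $ i $ i' = C_psi e1 \<psi> \<rho> $ i $ i'" for i i'
    proof -
      have "sum_list (map (\<lambda>K. K ** \<rho> ** adj K) Ks) $ i $ i'
          = proj_basis e1 $ i $ i' * expect \<psi> \<rho>
            + (\<Sum>j\<in>UNIV - {e1}. \<Sum>l\<in>UNIV. uv c j $ i * cnj (uv c j $ i') * expect (wv \<psi> l) \<rho>)"
        unfolding sl_entry Ks_def
        by (simp add: o_def g_def sandw_outer ev_outer_entry prodsum[symmetric])
      also have "\<dots> = proj_basis e1 $ i $ i' * expect \<psi> \<rho>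
            + (\<Sum>j\<in>UNIV - {e1}. uv c j $ i * cnj (uv c j $ i')) * (mtrace \<rho> - expect \<psi> \<rho>)"
        by (simp add: sum_distrib_left[symmetric] sum_distrib_right wv_expect[OF un])
      also have "\<dots> = C_psi e1 \<psi> \<rho> $ i $ i'"
        by (simp add: uv_sum cc C_psi_def proj_basis_def mat_def d_def)
      finally show ?thesis .
    qed
    then show ?thesis by (simp add: vec_eq_iff)
  qed
  have K2: "sum_list (map (\<lambda>K. adj K ** K) Ks) = mat 1"
  proof -
    have "sum_list (map (\<lambda>K. adj K ** K) Ks) $ i $ i' = mat 1 $ i $ i'" for i i'
    proof -
      define G where "G = (\<lambda>l. cnj c * c * (wv \<psi> l $ i * cnj (wv \<psi> l $ i')))"
      have "sum_list (map (\<lambda>K. adj K ** K) Ks) $ i $ i'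
          = \<psi>$i * cnj (\<psi>$i') + sum_list (map (\<lambda>p. G (snd p)) P)"
        unfolding sl_entry Ks_def G_def
        by (simp add: o_def g_def adj_outer ev_norm uv_norm mult.assoc)
      also have "\<dots> = \<psi>$i * cnj (\<psi>$i') + of_nat (card (UNIV - {e1})) * (\<Sum>l\<in>UNIV. G l)"
      proof -
        have "sum_list (map (\<lambda>p. G (snd p)) P) = (\<Sum>p\<in>(UNIV - {e1}) \<times> UNIV. G (snd p))"
          by (rule sl_univ[OF P(2,1)])
        also have "\<dots> = (\<Sum>a\<in>UNIV - {e1}. \<Sum>b\<in>UNIV. G b)"
          by (simp add: sum.cartesian_product')
        also have "\<dots> = of_nat (card (UNIV - {e1})) * (\<Sum>l\<in>UNIV. G l)"
          by (simp only: sum_constant)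
        finally show ?thesis by simp
      qed
      also have "\<dots> = \<psi>$i * cnj (\<psi>$i') + of_nat (card (UNIV - {e1})) * (cnj c * c) * ((if i = i' then 1 else 0) - \<psi>$i * cnj (\<psi>$i'))"
        unfolding G_def by (simp only: sum_distrib_left[symmetric] wv_sum[OF un] mult.assoc)
      also have "\<dots> = mat 1 $ i $ i'"
        using dne by (simp add: cardA cc mat_def d_def)
      finally show ?thesis .
    qed
    then show ?thesis by (simp add: vec_eq_iff)
  qed
  have K3: "\<forall>K\<in>set Ks. (\<lambda>\<rho>. K ** \<rho> ** adj K) \<circ> dephase
                          = dephase \<circ> (\<lambda>\<rho>. K ** \<rho> ** adj K) \<circ> dephase"
  proof
    fix K assume "K \<in> set Ks"
    then consider "K = outer (ev e1) \<psi>" | p where "K = g p" by (auto simp: Ks_def)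
    then show "(\<lambda>\<rho>. K ** \<rho> ** adj K) \<circ> dephase = dephase \<circ> (\<lambda>\<rho>. K ** \<rho> ** adj K) \<circ> dephase"
    proof cases
      case 1
      have "\<forall>a. a \<noteq> e1 \<longrightarrow> ev e1 $ a = 0" by (simp add: ev_def)
      from IO_cond_outer[OF this, of \<psi>] 1 show ?thesis by simp
    next
      case 2
      have "\<forall>a. a \<noteq> fst p \<longrightarrow> uv c (fst p) $ a = 0" by (simp add: uv_def)
      from IO_cond_outer[OF this, of "wv \<psi> (snd p)"] 2 show ?thesis by (simp add: g_def)
    qed
  qed
  show ?thesis unfolding IO_def kraus_rep_def mem_Collect_eq using K1 K2 K3 by blast
qed

lemma id_commutant: "id \<in> commutant S"
  by (simp add: commutant_def channel_id)

lemma mtrace_proj: "mtrace (proj_basis k) = 1"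
  by (simp add: mtrace_def proj_basis_def)

lemma repl_proj: "repl k (proj_basis k) = proj_basis k"
  by (simp add: repl_def mtrace_proj vec_eq_iff)

lemma commutant_IO:
  fixes e1 :: "'n::finite"
  assumes "CARD('n) \<ge> 2"
  shows "commutant (IO :: ('n cmat \<Rightarrow> 'n cmat) set) \<subseteq> {id}"
proof
  fix B :: "'n cmat \<Rightarrow> 'n cmat" assume "B \<in> commutant IO"
  then have ch: "channel B" and cm: "\<And>E. E \<in> IO \<Longrightarrow> B \<circ> E = E \<circ> B"
    by (auto simp: commutant_def)
  obtain Ks where K: "kraus_rep B Ks" using ch by (auto simp: channel_def)
  have "basis_preserving B"
    unfolding basis_preserving_def
  proof
    fix k :: 'n
    have "B (repl k (proj_basis k)) = repl k (B (proj_basis k))"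
      using cm[OF repl_IO[of k]] by (metis comp_apply)
    then show "B (proj_basis k) = proj_basis k"
      by (simp add: repl_proj repl_def kraus_trace[OF K] mtrace_proj vec_eq_iff)
  qed
  moreover have "\<forall>\<psi>::complex^'n. norm \<psi> = 1 \<longrightarrow> B \<circ> C_psi e1 \<psi> = C_psi e1 \<psi> \<circ> B"
    using cm C_psi_IO[OF assms] by blast
  ultimately show "B \<in> {id}" using part1[OF ch] by blast
qed

theorem mainTheorem11:
  fixes e1 :: "'n::finite"
  assumes "CARD('n) \<ge> 2"
  shows "{B :: 'n cmat \<Rightarrow> 'n cmat. channel B \<and> basis_preserving B \<and>
            (\<forall>\<psi>::complex^'n. norm \<psi> = 1 \<longrightarrow> B \<circ> C_psi e1 \<psi> = C_psi e1 \<psi> \<circ> B)} = {id}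
         \<and> commutant (MIO :: ('n cmat \<Rightarrow> 'n cmat) set) = {id}
         \<and> commutant (IO :: ('n cmat \<Rightarrow> 'n cmat) set) = {id}"
proof (intro conjI)
  show "{B :: 'n cmat \<Rightarrow> 'n cmat. channel B \<and> basis_preserving B \<and>
            (\<forall>\<psi>::complex^'n. norm \<psi> = 1 \<longrightarrow> B \<circ> C_psi e1 \<psi> = C_psi e1 \<psi> \<circ> B)} = {id}"
    using part1 by (auto simp: channel_id basis_preserving_def)
  have io: "commutant (IO :: ('n cmat \<Rightarrow> 'n cmat) set) \<subseteq> {id}"
    by (rule commutant_IO[OF assms])
  then show "commutant (IO :: ('n cmat \<Rightarrow> 'n cmat) set) = {id}"
    using id_commutant by blast
  have "commutant (MIO :: ('n cmat \<Rightarrow> 'n cmat) set) \<subseteq> commutant IO"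
    using IO_sub_MIO by (auto simp: commutant_def)
  with io show "commutant (MIO :: ('n cmat \<Rightarrow> 'n cmat) set) = {id}"
    using id_commutant by blast
qed

end
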